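(* Let $f(x_1,x_2,x_3)\in\mathbf{Z}[x_1,x_2,x_3]$ be a polynomial of degree two with coprime coefficients and let $B\ge1$. Then at least one of the following holds: (i) $\|f\|=O(B^{20})$ (with an absolute implied constant); (ii) there is a quadratic polynomial $g\in\mathbf{Z}[x_1,x_2,x_3]$, not proportional to $f$, such that $g(\mathbf{a})=0$ for every $\mathbf{a}\in\mathbf{Z}^3\cap[-B,B]^3$ with $f(\mathbf{a})=0$.
   Context: For a polynomial $P$, $\|P\|$ denotes the maximum modulus of its coefficients. *)

theory Defs
  imports Complex_Main
begin

text \<open>Polynomials in Z[x1,x2,x3] of total degree at most 2, represented by their
coefficient function on exponent triples (i,j,k), i.e. the coefficient of
x1^i x2^j x3^k.\<close>

type_synonym qcoeffs = "nat \<times> nat \<times> nat \<Rightarrow> int"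

definition monos2 :: "(nat \<times> nat \<times> nat) set" where
  "monos2 = {(i, j, k). i + j + k \<le> 2}"

definition deg_le2 :: "qcoeffs \<Rightarrow> bool" where
  "deg_le2 c \<longleftrightarrow> (\<forall>i j k. 2 < i + j + k \<longrightarrow> c (i, j, k) = 0)"

definition deg_eq2 :: "qcoeffs \<Rightarrow> bool" where
  "deg_eq2 c \<longleftrightarrow> deg_le2 c \<and> (\<exists>i j k. i + j + k = 2 \<and> c (i, j, k) \<noteq> 0)"

definition qeval :: "qcoeffs \<Rightarrow> int \<Rightarrow> int \<Rightarrow> int \<Rightarrow> int" where
  "qeval c a1 a2 a3 = (\<Sum>(i, j, k)\<in>monos2. c (i, j, k) * a1 ^ i * a2 ^ j * a3 ^ k)"

definition coprime_coeffs :: "qcoeffs \<Rightarrow> bool" where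
  "coprime_coeffs c \<longleftrightarrow> Gcd (c ` monos2) = 1"

definition qheight :: "qcoeffs \<Rightarrow> int" where
  "qheight c = Max ((\<lambda>m. \<bar>c m\<bar>) ` monos2)"

definition proportional :: "qcoeffs \<Rightarrow> qcoeffs \<Rightarrow> bool" where
  "proportional g f \<longleftrightarrow> (\<exists>a b :: int. (a, b) \<noteq> (0, 0) \<and> (\<forall>m. a * g m = b * f m))"

end

theory Submission imports Defs "Jordan_Normal_Form.Determinant" begin
lemma aux3: "(i::nat) + j + k \<le> 2 \<Longrightarrow> (i,j,k) \<in> {(0,0,0),(1,0,0),(0,1,0),(0,0,1),(2,0,0),(0,2,0),(0,0,2),(1,1,0),(1,0,1),(0,1,1)}"
proof -
  assume h: "i + j + k \<le> 2"
  have "i = 0 \<or> i = 1 \<or> i = 2" using h by linarith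
  moreover have "j = 0 \<or> j = 1 \<or> j = 2" using h by linarith
  moreover have "k = 0 \<or> k = 1 \<or> k = 2" using h by linarith
  ultimately show ?thesis using h by (elim disjE) simp_all
qed
lemma monos2_eq: "monos2 = {(0,0,0),(1,0,0),(0,1,0),(0,0,1),(2,0,0),(0,2,0),(0,0,2),(1,1,0),(1,0,1),(0,1,1)}"
proof (rule equalityI)
  show "monos2 \<subseteq> {(0,0,0),(1,0,0),(0,1,0),(0,0,1),(2,0,0),(0,2,0),(0,0,2),(1,1,0),(1,0,1),(0,1,1)}"
  proof
    fix x assume "x \<in> monos2"
    then obtain i j k where "x = (i,j,k)" "i+j+k \<le> 2" by (auto simp: monos2_def)
    thus "x \<in> {(0,0,0),(1,0,0),(0,1,0),(0,0,1),(2,0,0),(0,2,0),(0,0,2),(1,1,0),(1,0,1),(0,1,1)}"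
      using aux3 by simp
  qed
qed (simp add: monos2_def)
lemma card_monos2: "card monos2 = 10" "finite monos2" unfolding monos2_eq by auto

definition V :: "int\<times>int\<times>int \<Rightarrow> nat\<times>nat\<times>nat \<Rightarrow> int" where
  "V a t = fst a ^ fst t * fst (snd a) ^ fst (snd t) * snd (snd a) ^ snd (snd t)"

definition ev :: "qcoeffs \<Rightarrow> int\<times>int\<times>int \<Rightarrow> int" where
  "ev c a = (\<Sum>t\<in>monos2. c t * V a t)"

lemma qeval_ev: "qeval c a1 a2 a3 = ev c (a1,a2,a3)"
  unfolding qeval_def ev_def V_def by (intro sum.cong) (auto simp: mult.assoc split: prod.splits)

lemma ev_lin: "ev (\<lambda>t. x * c t + y * d t) a = x * ev c a + y * ev d a"
  unfolding ev_def by (simp add: sum.distrib sum_distrib_left algebra_simps)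

definition Mtx :: "(int\<times>int\<times>int) list \<Rightarrow> (nat\<times>nat\<times>nat) list \<Rightarrow> int mat" where
  "Mtx ps cs = mat (length ps) (length cs) (\<lambda>(i,j). V (ps!i) (cs!j))"

lemma sum_distinct_list:
  assumes "distinct cs" shows "(\<Sum>j<length cs. g (cs!j)) = (\<Sum>t\<in>set cs. g t)"
proof -
  have "set cs = (!) cs ` {..<length cs}" by (auto simp: in_set_conv_nth)
  moreover have "inj_on ((!) cs) {..<length cs}" using assms by (auto simp: inj_on_def nth_eq_iff_index_eq)
  ultimately show ?thesis by (simp add: sum.reindex)
qed

lemma sum_support:
  assumes "\<forall>t. t \<notin> set cs \<longrightarrow> x t = 0" "set cs \<subseteq> monos2"
  shows "(\<Sum>t\<in>monos2. x t * w t) = (\<Sum>t\<in>set cs. x t * (w t :: int))"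
  by (rule sum.mono_neutral_right) (use assms card_monos2 in auto)

lemma nonsing:
  assumes "length ps = k" "length cs = k" "distinct cs" "set cs \<subseteq> monos2" "det (Mtx ps cs) \<noteq> 0"
    "\<forall>t. t \<notin> set cs \<longrightarrow> x t = 0" "\<forall>i<k. ev x (ps!i) = 0"
  shows "\<forall>t\<in>set cs. x t = 0"
proof -
  define v where "v = vec k (\<lambda>j. x (cs!j))"
  have A: "Mtx ps cs \<in> carrier_mat k k" using assms by (simp add: Mtx_def)
  have "Mtx ps cs *\<^sub>v v = 0\<^sub>v k"
  proof (rule eq_vecI)
    fix i assume i: "i < dim_vec (0\<^sub>v k :: int vec)"
    hence ik: "i<k" by simp
    have "(Mtx ps cs *\<^sub>v v) $ i = (\<Sum>j<length cs. V (ps!i) (cs!j) * x (cs!j))"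
      using ik assms(1,2) by (simp add: Mtx_def scalar_prod_def v_def atLeast0LessThan)
    also have "\<dots> = (\<Sum>t\<in>set cs. x t * V (ps!i) t)"
      using sum_distinct_list[OF assms(3), of "\<lambda>t. x t * V (ps!i) t"] by (simp add: mult.commute)
    also have "\<dots> = ev x (ps!i)" unfolding ev_def using sum_support[OF assms(6,4)] by simp
    also have "\<dots> = 0" using assms(7) ik by simp
    finally show "(Mtx ps cs *\<^sub>v v) $ i = 0\<^sub>v k $ i" using ik by simp
  qed (simp add: v_def Mtx_def assms)
  moreover have "v \<in> carrier_vec k" by (simp add: v_def)
  ultimately have "v = 0\<^sub>v k" using det_0_iff_vec_prod_zero[OF A] assms(5) by blast
  show ?thesis
  proof
    fix t assume "t \<in> set cs"
    then obtain j where j: "j < k" "t = cs!j" using assms(2) by (auto simp: in_set_conv_nth)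
    have "v $ j = 0" using \<open>v = 0\<^sub>v k\<close> j by simp
    thus "x t = 0" using j by (simp add: v_def)
  qed
qed

lemma det_bound:
  assumes A: "A \<in> carrier_mat k k" and M: "0 \<le> M"
    and b: "\<forall>i<k. \<forall>j<k. \<bar>real_of_int (A $$ (i,j))\<bar> \<le> M"
  shows "\<bar>real_of_int (det A)\<bar> \<le> fact k * M ^ k"
proof -
  let ?P = "{p. p permutes {0..<k}}"
  have fin: "finite ?P" by (simp add: finite_permutations)
  have "\<bar>real_of_int (det A)\<bar> = \<bar>\<Sum>p\<in>?P. real_of_int (sign p) * (\<Prod>i = 0..<k. real_of_int (A $$ (i, p i)))\<bar>"
    unfolding det_def'[OF A] by (simp only: of_int_sum of_int_mult of_int_prod of_int_eq_id id_def)
  also have "\<dots> \<le> (\<Sum>p\<in>?P. \<bar>real_of_int (sign p) * (\<Prod>i = 0..<k. real_of_int (A $$ (i, p i)))\<bar>)"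
    by (rule sum_abs)
  also have "\<dots> \<le> (\<Sum>p\<in>?P. M ^ k)"
  proof (rule sum_mono)
    fix p assume p: "p \<in> ?P"
    have "\<bar>real_of_int (sign p) * (\<Prod>i = 0..<k. real_of_int (A $$ (i, p i)))\<bar>
        = (\<Prod>i = 0..<k. \<bar>real_of_int (A $$ (i, p i))\<bar>)"
    proof -
      have "\<bar>real_of_int (sign p)\<bar> = 1" by (simp add: sign_def)
      thus ?thesis by (simp only: abs_mult abs_prod)
    qed
    also have "\<dots> \<le> (\<Prod>i = 0..<k. M)"
    proof (rule prod_mono)
      fix i assume i: "i \<in> {0..<k}"
      have "p i \<in> {0..<k}" using p i by (simp add: permutes_in_image)
      thus "0 \<le> \<bar>real_of_int (A $$ (i, p i))\<bar> \<and> \<bar>real_of_int (A $$ (i, p i))\<bar> \<le> M"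
        using b i by auto
    qed
    finally show "\<bar>real_of_int (sign p) * (\<Prod>i = 0..<k. real_of_int (A $$ (i, p i)))\<bar> \<le> M ^ k" by (simp only: prod_constant card_atLeastLessThan diff_zero)
  qed
  also have "\<dots> = fact k * M ^ k"
  proof -
    have c: "card ?P = fact k" by (rule card_permutations) simp_all
    show ?thesis by (simp only: sum_constant c of_nat_fact)
  qed
  finally show ?thesis .
qed

definition Db :: "(int\<times>int\<times>int) list \<Rightarrow> (nat\<times>nat\<times>nat) list \<Rightarrow> nat\<times>nat\<times>nat \<Rightarrow> nat \<Rightarrow> int" where
  "Db ps cs c j = cofactor (Mtx (ps@[(0,0,0)]) (cs@[c])) (length ps) j"

definition hb :: "(int\<times>int\<times>int) list \<Rightarrow> (nat\<times>nat\<times>nat) list \<Rightarrow> nat\<times>nat\<times>nat \<Rightarrow> qcoeffs" where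
  "hb ps cs c t = (\<Sum>j<Suc (length cs). if (cs@[c])!j = t then Db ps cs c j else 0)"

lemma cof_indep:
  "cofactor (Mtx (ps@[a]) cs') (length ps) j = cofactor (Mtx (ps@[b]) cs') (length ps) j"
proof -
  have "mat_delete (Mtx (ps@[a]) cs') (length ps) j = mat_delete (Mtx (ps@[b]) cs') (length ps) j"
    by (rule eq_matI) (auto simp: mat_delete_def Mtx_def nth_append)
  thus ?thesis unfolding cofactor_def by simp
qed

lemma ev_hb:
  assumes "length ps = length cs" "set (cs@[c]) \<subseteq> monos2"
  shows "ev (hb ps cs c) a = det (Mtx (ps@[a]) (cs@[c]))"
proof -
  let ?k = "length ps"
  let ?cs = "cs@[c]"
  let ?A = "Mtx (ps@[a]) ?cs"
  have A: "?A \<in> carrier_mat (Suc ?k) (Suc ?k)" using assms(1) by (simp add: Mtx_def)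
  have "det ?A = (\<Sum>j<Suc ?k. ?A $$ (?k,j) * cofactor ?A ?k j)"
    by (rule laplace_expansion_row[OF A]) simp
  also have "\<dots> = (\<Sum>j<Suc ?k. V a (?cs!j) * Db ps cs c j)"
  proof (rule sum.cong)
    fix j assume "j \<in> {..<Suc ?k}"
    hence "?A $$ (?k,j) = V a (?cs!j)" using assms(1) by (simp add: Mtx_def nth_append)
    moreover have "cofactor ?A ?k j = Db ps cs c j" unfolding Db_def by (rule cof_indep)
    ultimately show "?A $$ (?k,j) * cofactor ?A ?k j = V a (?cs!j) * Db ps cs c j" by simp
  qed simp
  finally have d: "det ?A = (\<Sum>j<Suc ?k. V a (?cs!j) * Db ps cs c j)" .
  have "ev (hb ps cs c) a = (\<Sum>t\<in>monos2. \<Sum>j<Suc (length cs). if ?cs!j = t then Db ps cs c j * V a t else 0)"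
    unfolding ev_def hb_def sum_distrib_right by (intro sum.cong refl) simp
  also have "\<dots> = (\<Sum>j<Suc (length cs). \<Sum>t\<in>monos2. if ?cs!j = t then Db ps cs c j * V a t else 0)"
    by (rule sum.swap)
  also have "\<dots> = (\<Sum>j<Suc (length cs). Db ps cs c j * V a (?cs!j))"
  proof (rule sum.cong)
    fix j assume j: "j \<in> {..<Suc (length cs)}"
    hence "?cs!j \<in> set ?cs" by (intro nth_mem) simp
    hence "?cs!j \<in> monos2" using assms(2) by blast
    thus "(\<Sum>t\<in>monos2. if ?cs!j = t then Db ps cs c j * V a t else 0) = Db ps cs c j * V a (?cs!j)"
      using card_monos2(2) by simp
  qed simp
  finally show ?thesis using d assms(1) by (simp add: mult.commute)
qed

lemma hb_at:
  assumes "distinct (cs@[c])" "j < Suc (length cs)"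
  shows "hb ps cs c ((cs@[c])!j) = Db ps cs c j"
proof -
  have "hb ps cs c ((cs@[c])!j) = (\<Sum>j'<Suc (length cs). if j' = j then Db ps cs c j' else 0)"
    unfolding hb_def
  proof (rule sum.cong)
    fix j' assume "j' \<in> {..<Suc (length cs)}"
    thus "(if (cs@[c])!j' = (cs@[c])!j then Db ps cs c j' else 0) = (if j' = j then Db ps cs c j' else 0)"
      using assms nth_eq_iff_index_eq[OF assms(1)] by simp
  qed simp
  also have "\<dots> = Db ps cs c j" using assms(2) by simp
  finally show ?thesis .
qed

lemma hb_out:
  assumes "t \<notin> set (cs@[c])"
  shows "hb ps cs c t = 0"
  unfolding hb_def
proof (rule sum.neutral, rule ballI)
  fix j assume "j \<in> {..<Suc (length cs)}"
  hence "(cs@[c])!j \<in> set (cs@[c])" by (intro nth_mem) simp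
  thus "(if (cs@[c])!j = t then Db ps cs c j else 0) = 0" using assms by auto
qed

lemma Db_last:
  assumes "length ps = length cs"
  shows "Db ps cs c (length cs) = det (Mtx ps cs)"
proof -
  let ?k = "length cs"
  have "mat_delete (Mtx (ps@[(0,0,0)]) (cs@[c])) (length ps) ?k = Mtx ps cs"
    using assms by (intro eq_matI) (auto simp: mat_delete_def Mtx_def nth_append)
  moreover have "(-1::int)^(?k + ?k) = 1" by (simp add: mult_2[symmetric] power_mult)
  ultimately show ?thesis unfolding Db_def cofactor_def using assms by simp
qed

lemma V_bound:
  assumes "\<bar>real_of_int (fst a)\<bar> \<le> B" "\<bar>real_of_int (fst (snd a))\<bar> \<le> B" "\<bar>real_of_int (snd (snd a))\<bar> \<le> B"
    "1 \<le> B" "t \<in> monos2"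
  shows "\<bar>real_of_int (V a t)\<bar> \<le> B^2"
proof -
  obtain i j k where t: "t = (i,j,k)" by (cases t) auto
  have s: "i + j + k \<le> 2" using assms(5) t by (simp add: monos2_def)
  have "\<bar>real_of_int (V a t)\<bar> = \<bar>real_of_int (fst a)\<bar>^i * \<bar>real_of_int (fst (snd a))\<bar>^j * \<bar>real_of_int (snd (snd a))\<bar>^k"
    by (simp add: V_def t abs_mult power_abs)
  also have "\<dots> \<le> B^i * B^j * B^k"
    by (intro mult_mono power_mono assms) (use assms(4) in auto)
  also have "\<dots> = B^(i+j+k)" by (simp add: power_add)
  also have "\<dots> \<le> B^2" by (rule power_increasing[OF s assms(4)])
  finally show ?thesis .
qed

lemma Db_bound:
  assumes "length ps = length cs" "set (cs@[c]) \<subseteq> monos2" "1 \<le> B"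
    "\<forall>a\<in>set ps. \<bar>real_of_int (fst a)\<bar> \<le> B \<and> \<bar>real_of_int (fst (snd a))\<bar> \<le> B \<and> \<bar>real_of_int (snd (snd a))\<bar> \<le> B"
  shows "\<bar>real_of_int (Db ps cs c j)\<bar> \<le> fact (length cs) * (B^2)^(length cs)"
proof -
  let ?k = "length cs"
  let ?A = "Mtx (ps@[(0,0,0)]) (cs@[c])"
  let ?D = "mat_delete ?A (length ps) j"
  have D: "?D \<in> carrier_mat ?k ?k" using assms(1) by (simp add: Mtx_def mat_delete_def)
  have "\<bar>real_of_int (det ?D)\<bar> \<le> fact ?k * (B^2)^?k"
  proof (rule det_bound[OF D])
    show "0 \<le> B^2" by simp
    show "\<forall>i<?k. \<forall>j'<?k. \<bar>real_of_int (?D $$ (i,j'))\<bar> \<le> B^2"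
    proof (intro allI impI)
      fix i j' assume i: "i < ?k" and j': "j' < ?k"
      let ?jj = "if j' < j then j' else Suc j'"
      have jj: "?jj < Suc ?k" using j' by simp
      have e: "?D $$ (i,j') = V (ps!i) ((cs@[c])!?jj)"
        using i j' assms(1) by (simp add: mat_delete_def Mtx_def nth_append)
      have p: "ps!i \<in> set ps" using i assms(1) by simp
      have m: "(cs@[c])!?jj \<in> monos2" using assms(2) nth_mem[of ?jj "cs@[c]"] jj by auto
      show "\<bar>real_of_int (?D $$ (i,j'))\<bar> \<le> B^2" unfolding e
        by (rule V_bound) (use assms(3,4) p m in auto)
    qed
  qed
  moreover have "\<bar>real_of_int (Db ps cs c j)\<bar> = \<bar>real_of_int (det ?D)\<bar>"
    unfolding Db_def cofactor_def by (simp add: abs_mult)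
  ultimately show ?thesis by simp
qed


lemma ev_add: "ev (\<lambda>t. c t + d t) a = ev c a + ev d a"
  using ev_lin[of 1 c 1 d a] by simp

lemma finish:
  assumes f: "deg_eq2 f" and h1d: "deg_le2 h1" and h2d: "deg_le2 h2"
    and n1: "h1 c1 \<noteq> 0" and z12: "h1 c2 = 0" and n2: "h2 c2 \<noteq> 0"
    and e1: "\<forall>a\<in>Z. ev h1 a = 0" and e2: "\<forall>a\<in>Z. ev h2 a = 0" and ef: "\<forall>a\<in>Z. ev f a = 0"
  shows "\<exists>g. deg_eq2 g \<and> \<not> proportional g f \<and> (\<forall>a\<in>Z. ev g a = 0)"
proof -
  obtain i0 j0 k0 where q0: "i0 + j0 + k0 = 2" "f (i0,j0,k0) \<noteq> 0" using f by (auto simp: deg_eq2_def)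
  have np: "\<not> proportional h1 f \<or> \<not> proportional h2 f"
  proof (rule ccontr)
    assume "\<not> (\<not> proportional h1 f \<or> \<not> proportional h2 f)"
    then obtain a1 b1 a2 b2 where p1: "(a1,b1) \<noteq> (0,0)" "\<forall>m. a1 * h1 m = b1 * f m"
      and p2: "(a2,b2) \<noteq> (0,0)" "\<forall>m. a2 * h2 m = b2 * f m"
      unfolding proportional_def by blast
    have "a1 \<noteq> 0"
    proof
      assume "a1 = 0"
      hence "b1 \<noteq> 0" "b1 * f (i0,j0,k0) = 0" using p1 by (auto dest: spec[of _ "(i0,j0,k0)"])
      thus False using q0 by simp
    qed
    have "a2 \<noteq> 0"
    proof
      assume "a2 = 0"
      hence "b2 \<noteq> 0" "b2 * f (i0,j0,k0) = 0" using p2 by (auto dest: spec[of _ "(i0,j0,k0)"])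
      thus False using q0 by simp
    qed
    have "b1 \<noteq> 0"
    proof
      assume "b1 = 0"
      hence "a1 * h1 c1 = 0" using p1(2) by (metis mult_zero_left)
      thus False using \<open>a1 \<noteq> 0\<close> n1 by simp
    qed
    have "b1 * f c2 = 0" using p1(2) z12 by (metis mult_zero_right)
    hence "f c2 = 0" using \<open>b1 \<noteq> 0\<close> by simp
    hence "a2 * h2 c2 = 0" using p2(2) by (metis mult_zero_right)
    thus False using \<open>a2 \<noteq> 0\<close> n2 by simp
  qed
  obtain h where hp: "\<not> proportional h f" "deg_le2 h" "\<forall>a\<in>Z. ev h a = 0"
    using np h1d h2d e1 e2 by blast
  show ?thesis
  proof (cases "\<exists>i j k. i + j + k = 2 \<and> h (i,j,k) \<noteq> 0")
    case True
    hence "deg_eq2 h" using hp(2) by (simp add: deg_eq2_def)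
    thus ?thesis using hp by blast
  next
    case False
    define g where "g = (\<lambda>t. f t + h t)"
    have "deg_le2 g" using f hp(2) by (simp add: deg_eq2_def deg_le2_def g_def)
    moreover have "g (i0,j0,k0) \<noteq> 0" using False q0 by (simp add: g_def)
    ultimately have "deg_eq2 g" using q0 by (auto simp: deg_eq2_def)
    moreover have "\<not> proportional g f"
    proof
      assume "proportional g f"
      then obtain a b where ab: "(a,b) \<noteq> (0,0)" "\<forall>m. a * g m = b * f m" unfolding proportional_def by blast
      have "(a, b - a) \<noteq> (0,0)" using ab(1) by auto
      moreover have "\<forall>m. a * h m = (b - a) * f m" using ab(2) by (simp add: g_def algebra_simps)
      ultimately have "proportional h f" unfolding proportional_def by blast
      thus False using hp(1) by simp
    qed
    moreover have "\<forall>a\<in>Z. ev g a = 0" using ef hp(3) by (simp add: g_def ev_add)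
    ultimately show ?thesis by blast
  qed
qed


lemma main:
  fixes f :: qcoeffs and B :: real
  assumes fd: "deg_eq2 f" and cop: "coprime_coeffs f" and B1: "1 \<le> B"
  defines "Z \<equiv> {a. \<bar>real_of_int (fst a)\<bar> \<le> B \<and> \<bar>real_of_int (fst (snd a))\<bar> \<le> B \<and> \<bar>real_of_int (snd (snd a))\<bar> \<le> B \<and> ev f a = 0}"
  shows "real_of_int (qheight f) \<le> fact 9 * B ^ 20 \<or>
       (\<exists>g. deg_eq2 g \<and> \<not> proportional g f \<and> (\<forall>a\<in>Z. ev g a = 0))"
proof -
  define good where "good = (\<lambda>k. \<exists>ps cs. length ps = k \<and> length cs = k \<and> set ps \<subseteq> Z \<and> distinct cs \<and> set cs \<subseteq> monos2 \<and> det (Mtx ps cs) \<noteq> 0)"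
  have bnd: "\<forall>k. good k \<longrightarrow> k \<le> 10"
  proof (intro allI impI)
    fix k assume "good k"
    then obtain cs where "length cs = k" "distinct cs" "set cs \<subseteq> monos2" unfolding good_def by blast
    hence "k = card (set cs)" by (simp add: distinct_card)
    also have "\<dots> \<le> card monos2" using \<open>set cs \<subseteq> monos2\<close> card_monos2(2) by (rule card_mono[rotated])
    finally show "k \<le> 10" using card_monos2 by simp
  qed
  have g0: "good 0" unfolding good_def
    by (rule exI[of _ "[]"], rule exI[of _ "[]"]) (simp add: Mtx_def det_def)
  define k where "k = Greatest good"
  have gk: "good k" unfolding k_def using GreatestI_nat[of good 0 10] g0 bnd by blast
  have mx: "\<And>k'. good k' \<Longrightarrow> k' \<le> k" unfolding k_def using Greatest_le_nat[of good _ 10] bnd by blast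
  obtain ps cs where pc: "length ps = k" "length cs = k" "set ps \<subseteq> Z" "distinct cs" "set cs \<subseteq> monos2" "det (Mtx ps cs) \<noteq> 0"
    using gk unfolding good_def by blast
  have fout: "\<forall>t. t \<notin> monos2 \<longrightarrow> f t = 0"
  proof (intro allI impI)
    fix t assume "t \<notin> monos2"
    then obtain i j l where "t = (i,j,l)" "2 < i + j + l" by (cases t) (auto simp: monos2_def)
    thus "f t = 0" using fd by (simp add: deg_eq2_def deg_le2_def)
  qed
  obtain t0 where t0: "f t0 \<noteq> 0" "t0 \<in> monos2"
    using fd by (auto simp: deg_eq2_def monos2_def)
  have psZ: "\<forall>i<k. ps!i \<in> Z" using pc(1,3) nth_mem by blast
  have evf: "\<forall>i<k. ev f (ps!i) = 0" using psZ by (simp add: Z_def)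
  have box: "\<forall>a\<in>set ps. \<bar>real_of_int (fst a)\<bar> \<le> B \<and> \<bar>real_of_int (fst (snd a))\<bar> \<le> B \<and> \<bar>real_of_int (snd (snd a))\<bar> \<le> B"
    using pc(3) by (auto simp: Z_def)
  have key: "\<forall>a\<in>Z. ev (hb ps cs c) a = 0" if c: "c \<in> monos2" "c \<notin> set cs" for c
  proof
    fix a assume a: "a \<in> Z"
    have "ev (hb ps cs c) a = det (Mtx (ps@[a]) (cs@[c]))"
      by (rule ev_hb) (use pc c in auto)
    moreover have "det (Mtx (ps@[a]) (cs@[c])) = 0"
    proof (rule ccontr)
      assume "det (Mtx (ps@[a]) (cs@[c])) \<noteq> 0"
      hence "good (Suc k)" unfolding good_def
        by (rule_tac exI[of _ "ps@[a]"], rule_tac exI[of _ "cs@[c]"]) (use pc c a in auto)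
      thus False using mx by fastforce
    qed
    ultimately show "ev (hb ps cs c) a = 0" by simp
  qed
  have hbc: "hb ps cs c c = det (Mtx ps cs)" if c: "c \<notin> set cs" for c
  proof -
    have "hb ps cs c ((cs@[c])!length cs) = Db ps cs c (length cs)"
      by (rule hb_at) (use pc c in auto)
    moreover have "(cs@[c])!length cs = c" by simp
    ultimately show ?thesis using Db_last[of ps cs c] pc(1,2) by metis
  qed
  have hbdeg: "deg_le2 (hb ps cs c)" if c: "c \<in> monos2" for c
    unfolding deg_le2_def
  proof (intro allI impI)
    fix i j l :: nat assume "2 < i + j + l"
    hence "(i,j,l) \<notin> set (cs@[c])" using pc(5) c by (auto simp: monos2_def)
    thus "hb ps cs c (i,j,l) = 0" by (rule hb_out)
  qed
  have k10: "k \<le> 10" using bnd gk by blast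
  have cardS: "card (monos2 - set cs) = 10 - k"
    using card_Diff_subset[OF _ pc(5)] pc card_monos2 by (simp add: distinct_card)
  consider (a) "k = 10" | (b) "k = 9" | (c) "k \<le> 8" using k10 by linarith
  then show ?thesis
  proof cases
    case a
    have "set cs = monos2"
      using card_subset_eq[OF card_monos2(2) pc(5)] pc a card_monos2 by (simp add: distinct_card)
    have "\<forall>t\<in>set cs. f t = 0"
      by (rule nonsing[OF pc(1,2,4,5,6)]) (use fout evf \<open>set cs = monos2\<close> in auto)
    thus ?thesis using t0 \<open>set cs = monos2\<close> by auto
  next
    case b
    have "card (monos2 - set cs) = 1" using cardS b by simp
    then obtain c where S: "monos2 - set cs = {c}" by (rule card_1_singletonE)
    have c: "c \<in> monos2" "c \<notin> set cs" using S by auto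
    have all: "set (cs@[c]) = monos2" using S pc(5) by auto
    have dist: "distinct (cs@[c])" using pc(4) c by simp
    define h where "h = hb ps cs c"
    have hc: "h c \<noteq> 0" using hbc[OF c(2)] pc(6) by (simp add: h_def)
    have hout: "\<forall>t. t \<notin> monos2 \<longrightarrow> h t = 0"
    proof (intro allI impI)
      fix t assume "t \<notin> monos2"
      hence "t \<notin> set (cs@[c])" using all by simp
      thus "h t = 0" unfolding h_def by (rule hb_out)
    qed
    define x where "x = (\<lambda>t. h c * f t + (- f c) * h t)"
    have xs: "\<forall>t\<in>set cs. x t = 0"
    proof (rule nonsing[OF pc(1,2,4,5,6)])
      show "\<forall>t. t \<notin> set cs \<longrightarrow> x t = 0"
      proof (intro allI impI)
        fix t assume t: "t \<notin> set cs"
        show "x t = 0"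
        proof (cases "t = c")
          case True thus ?thesis by (simp add: x_def)
        next
          case False
          hence "t \<notin> monos2" using t S by auto
          hence "f t = 0" "h t = 0" using fout hout by blast+
          thus ?thesis by (simp add: x_def)
        qed
      qed
      show "\<forall>i<k. ev x (ps!i) = 0"
      proof (intro allI impI)
        fix i assume i: "i < k"
        have "ev h (ps!i) = 0" using key[OF c] psZ i by (simp add: h_def)
        thus "ev x (ps!i) = 0" unfolding x_def ev_lin using evf i by simp
      qed
    qed
    have prp: "\<forall>t. h c * f t = f c * h t"
    proof
      fix t
      have "x t = 0"
      proof (cases "t \<in> set cs")
        case True thus ?thesis using xs by simp
      next
        case False
        show ?thesis
        proof (cases "t = c")
          case True thus ?thesis by (simp add: x_def)
        next
          case False
          hence "t \<notin> monos2" using \<open>t \<notin> set cs\<close> S by auto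
          hence "f t = 0" "h t = 0" using fout hout by blast+
          thus ?thesis by (simp add: x_def)
        qed
      qed
      thus "h c * f t = f c * h t" by (simp add: x_def)
    qed
    have fc: "f c \<noteq> 0"
    proof
      assume "f c = 0"
      hence "h c * f t0 = 0" using prp by (metis mult_zero_left)
      thus False using hc t0 by simp
    qed
    have "f c dvd Gcd ((*) (h c) ` (f ` monos2))"
      unfolding dvd_Gcd_iff
    proof
      fix y assume "y \<in> (*) (h c) ` (f ` monos2)"
      then obtain t where "y = h c * f t" by auto
      thus "f c dvd y" using prp by simp
    qed
    also have "Gcd ((*) (h c) ` (f ` monos2)) = normalize (h c)"
      using cop unfolding coprime_coeffs_def by (simp add: Gcd_mult)
    finally have "f c dvd h c" by simp
    hence fch: "\<bar>f c\<bar> \<le> \<bar>h c\<bar>" using hc by (rule dvd_imp_le_int[rotated])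
    have ft: "\<bar>real_of_int (f t)\<bar> \<le> fact 9 * B^20" if t: "t \<in> monos2" for t
    proof -
      have e: "\<bar>h c\<bar> * \<bar>f t\<bar> = \<bar>f c\<bar> * \<bar>h t\<bar>" using prp by (metis abs_mult)
      also have "\<dots> \<le> \<bar>h c\<bar> * \<bar>h t\<bar>" using fch by (simp add: mult_right_mono)
      finally have "\<bar>f t\<bar> \<le> \<bar>h t\<bar>" using hc by simp
      obtain j where j: "j < Suc (length cs)" "t = (cs@[c])!j"
        using t all by (metis in_set_conv_nth length_append_singleton)
      have "h t = Db ps cs c j" unfolding h_def j(2) by (rule hb_at[OF dist j(1)])
      moreover have "\<bar>real_of_int (Db ps cs c j)\<bar> \<le> fact (length cs) * (B^2)^(length cs)"
        by (rule Db_bound) (use pc all B1 box in auto)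
      moreover have "(B^2)^(length cs) \<le> B^20"
      proof -
        have "(B^2)^(length cs) = B^18" using pc(2) b by (simp add: power_mult[symmetric])
        also have "\<dots> \<le> B^20" by (rule power_increasing) (use B1 in auto)
        finally show ?thesis .
      qed
      ultimately have "\<bar>real_of_int (h t)\<bar> \<le> fact 9 * B^20"
        using pc(2) b by (smt (verit) fact_ge_zero mult_left_mono)
      thus ?thesis using \<open>\<bar>f t\<bar> \<le> \<bar>h t\<bar>\<close> by linarith
    qed
    have "qheight f \<in> (\<lambda>m. \<bar>f m\<bar>) ` monos2" unfolding qheight_def
      by (rule Max_in) (use card_monos2 t0 in auto)
    then obtain t where "t \<in> monos2" "qheight f = \<bar>f t\<bar>" by auto
    thus ?thesis using ft by simp
  next
    case c
    let ?S = "monos2 - set cs"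
    have c2: "2 \<le> card ?S" using cardS c by simp
    hence "?S \<noteq> {}" by (metis card.empty not_numeral_le_zero)
    then obtain c1 where c1: "c1 \<in> ?S" by blast
    have "card (?S - {c1}) \<ge> 1" using c2 c1 card_monos2(2) by simp
    hence "?S - {c1} \<noteq> {}" by (metis card.empty not_one_le_zero)
    then obtain c2 where c2': "c2 \<in> ?S - {c1}" by blast
    show ?thesis
    proof (rule disjI2, rule finish)
      show "deg_eq2 f" by (rule fd)
      show "deg_le2 (hb ps cs c1)" using c1 by (intro hbdeg) simp
      show "deg_le2 (hb ps cs c2)" using c2' by (intro hbdeg) simp
      show "hb ps cs c1 c1 \<noteq> 0" using hbc c1 pc(6) by simp
      show "hb ps cs c1 c2 = 0" using c2' by (intro hb_out) auto
      show "hb ps cs c2 c2 \<noteq> 0" using hbc c2' pc(6) by simp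
      show "\<forall>a\<in>Z. ev (hb ps cs c1) a = 0" using key c1 by simp
      show "\<forall>a\<in>Z. ev (hb ps cs c2) a = 0" using key c2' by simp
      show "\<forall>a\<in>Z. ev f a = 0" by (simp add: Z_def)
    qed
  qed
qed

theorem lemma12:
  "\<exists>C :: real. \<forall>(f :: qcoeffs) (B :: real).
     deg_eq2 f \<and> coprime_coeffs f \<and> 1 \<le> B \<longrightarrow>
       real_of_int (qheight f) \<le> C * B ^ 20 \<or>
       (\<exists>g :: qcoeffs. deg_eq2 g \<and> \<not> proportional g f \<and>
          (\<forall>a1 a2 a3 :: int. \<bar>real_of_int a1\<bar> \<le> B \<and> \<bar>real_of_int a2\<bar> \<le> B \<and>
              \<bar>real_of_int a3\<bar> \<le> B \<and> qeval f a1 a2 a3 = 0 \<longrightarrow> qeval g a1 a2 a3 = 0))"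
proof (rule exI[of _ "fact 9"], intro allI impI)
  fix f :: qcoeffs and B :: real
  assume H: "deg_eq2 f \<and> coprime_coeffs f \<and> 1 \<le> B"
  from main[of f B] H show "real_of_int (qheight f) \<le> fact 9 * B ^ 20 \<or>
       (\<exists>g :: qcoeffs. deg_eq2 g \<and> \<not> proportional g f \<and>
          (\<forall>a1 a2 a3 :: int. \<bar>real_of_int a1\<bar> \<le> B \<and> \<bar>real_of_int a2\<bar> \<le> B \<and>
              \<bar>real_of_int a3\<bar> \<le> B \<and> qeval f a1 a2 a3 = 0 \<longrightarrow> qeval g a1 a2 a3 = 0))"
    by (auto simp: qeval_ev)
qed

end
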